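(* Assume $\alpha\ge2$. With $u_\varepsilon^s$ and $\mathbb A_\varepsilon$ as in the context, as $\varepsilon\to0^+$, $$\int_{R_\varepsilon}\mathbb A_\varepsilon\nabla u^s_\varepsilon\cdot\nabla u^s_\varepsilon\,dx\sim\begin{cases}\tfrac13\kappa^{-1}|\ln\varepsilon|&\text{if }\alpha=2,\\[2pt]\tfrac13\,\varepsilon^{\frac{3}{1+\alpha}-1}\kappa^{-\frac{3}{1+\alpha}}\dfrac{3\pi/(1+\alpha)}{\sin(3\pi/(1+\alpha))}&\text{if }\alpha>2.\end{cases}$$
   Context: Fix $\kappa>0$, $\alpha>0$, $\delta<0$. For $\varepsilon\ge0$: $H_\varepsilon(s)=\kappa|s|^{1+\alpha}+\varepsilon$; $\rho_\varepsilon(\xi_1)=\int_\delta^{\xi_1}ds/H_\varepsilon(s)$ for $\delta\le\xi_1<0$; $\ell_\varepsilon=\lim_{\xi_1\to0^-}\rho_\varepsilon(\xi_1)$ (finite for $\varepsilon>0$, $\ell_0=+\infty$); $\mu_\varepsilon=\rho_\varepsilon^{-1}:[0,\ell_\varepsilon)\to[\delta,0)$; $R_\varepsilon=(0,\ell_\varepsilon)\times(0,1)$. On $R_\varepsilon$, $\mathbb A_\varepsilon(x)=\mathrm{Id}+x_2H_0'(\mu_\varepsilon(x_1))\begin{pmatrix}0&-1\\-1&x_2H_0'(\mu_\varepsilon(x_1))\end{pmatrix}$. Let $\theta\in C^\infty(\mathbb R)$ with $\theta=0$ on $(-\infty,0]$ and $\theta=1$ on $[1,\infty)$, and define on $R_\varepsilon$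 $$u^s_\varepsilon(x)=\theta(x_1)\Big[-\int_0^{x_1}\mu_\varepsilon(s)\,ds+\tfrac12x_2^2\big(H_\varepsilon(\mu_\varepsilon(x_1))-\mu_\varepsilon(x_1)H_0'(\mu_\varepsilon(x_1))\big)\Big].$$ (In the paper $u^s_\varepsilon$ is extended by $0$ to the rest of the transformed domain, so its Dirichlet energy is the integral over $R_\varepsilon$.) *)

theory Defs
  imports "HOL-Analysis.Analysis" "HOL-Library.Landau_Symbols"
begin

text \<open>Parameters: kappa > 0, alpha > 0, delta < 0, eps \<ge> 0.\<close>

definition H :: "real \<Rightarrow> real \<Rightarrow> real \<Rightarrow> real \<Rightarrow> real" where
  "H \<kappa> \<alpha> \<epsilon> s = \<kappa> * \<bar>s\<bar> powr (1 + \<alpha>) + \<epsilon>"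

definition H0' :: "real \<Rightarrow> real \<Rightarrow> real \<Rightarrow> real" where
  "H0' \<kappa> \<alpha> s = deriv (H \<kappa> \<alpha> 0) s"

definition rho :: "real \<Rightarrow> real \<Rightarrow> real \<Rightarrow> real \<Rightarrow> real \<Rightarrow> real" where
  "rho \<kappa> \<alpha> \<delta> \<epsilon> \<xi> = integral {\<delta>..\<xi>} (\<lambda>s. 1 / H \<kappa> \<alpha> \<epsilon> s)"

definition ell :: "real \<Rightarrow> real \<Rightarrow> real \<Rightarrow> real \<Rightarrow> real" where
  "ell \<kappa> \<alpha> \<delta> \<epsilon> = Lim (at_left 0) (rho \<kappa> \<alpha> \<delta> \<epsilon>)"

definition mu :: "real \<Rightarrow> real \<Rightarrow> real \<Rightarrow> real \<Rightarrow> real \<Rightarrow> real" where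
  "mu \<kappa> \<alpha> \<delta> \<epsilon> = inv_into {\<delta>..<0} (rho \<kappa> \<alpha> \<delta> \<epsilon>)"

definition Rect :: "real \<Rightarrow> real \<Rightarrow> real \<Rightarrow> real \<Rightarrow> (real \<times> real) set" where
  "Rect \<kappa> \<alpha> \<delta> \<epsilon> = {0<..<ell \<kappa> \<alpha> \<delta> \<epsilon>} \<times> {0<..<1}"

text \<open>Entries of the matrix A_eps(x) = Id + x2 h [[0,-1],[-1,x2 h]], h = H_0'(mu_eps(x1))\<close>
definition Amat :: "real \<Rightarrow> real \<Rightarrow> real \<Rightarrow> real \<Rightarrow> real \<times> real \<Rightarrow> nat \<Rightarrow> nat \<Rightarrow> real" where
  "Amat \<kappa> \<alpha> \<delta> \<epsilon> x i j =
     (let h = H0' \<kappa> \<alpha> (mu \<kappa> \<alpha> \<delta> \<epsilon> (fst x)); x2 = snd x;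
          M = (\<lambda>i j. if i = 1 \<and> j = 1 then 0
                      else if i = 2 \<and> j = 2 then x2 * h else -1)
      in (if i = j then 1 else 0) + x2 * h * M i j)"

definition smooth :: "(real \<Rightarrow> real) \<Rightarrow> bool" where
  "smooth f \<longleftrightarrow> (\<forall>n x. ((deriv ^^ n) f) differentiable (at x))"

definition us :: "real \<Rightarrow> real \<Rightarrow> real \<Rightarrow> (real \<Rightarrow> real) \<Rightarrow> real \<Rightarrow> real \<times> real \<Rightarrow> real" where
  "us \<kappa> \<alpha> \<delta> \<theta> \<epsilon> x =
     (let x1 = fst x; x2 = snd x; m = mu \<kappa> \<alpha> \<delta> \<epsilon> x1 in
      \<theta> x1 * (- integral {0..x1} (mu \<kappa> \<alpha> \<delta> \<epsilon>)
               + 1/2 * x2\<^sup>2 * (H \<kappa> \<alpha> \<epsilon> m - m * H0' \<kappa> \<alpha> m)))"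

definition grad2 :: "(real \<times> real \<Rightarrow> real) \<Rightarrow> real \<times> real \<Rightarrow> nat \<Rightarrow> real" where
  "grad2 u x i = (if i = 1 then deriv (\<lambda>t. u (t, snd x)) (fst x)
                  else deriv (\<lambda>t. u (fst x, t)) (snd x))"

definition energy_density :: "real \<Rightarrow> real \<Rightarrow> real \<Rightarrow> (real \<Rightarrow> real) \<Rightarrow> real \<Rightarrow> real \<times> real \<Rightarrow> real" where
  "energy_density \<kappa> \<alpha> \<delta> \<theta> \<epsilon> x =
     (\<Sum>i\<in>{1,2::nat}. \<Sum>j\<in>{1,2::nat}.
        Amat \<kappa> \<alpha> \<delta> \<epsilon> x i j * grad2 (us \<kappa> \<alpha> \<delta> \<theta> \<epsilon>) x j * grad2 (us \<kappa> \<alpha> \<delta> \<theta> \<epsilon>) x i)"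

end

theory Submission
  imports Defs "HOL-Real_Asymp.Real_Asymp"
begin


locale EP =
  fixes k a d e :: real
  assumes k: "k > 0" and a: "a > 0" and d: "d < 0" and e: "e > 0"
begin

abbreviation "Hf \<equiv> H k a e"
abbreviation "rh \<equiv> rho k a d e"
definition "L = rh 0"
definition "mt = inv_into {d..0} rh"

lemma Hf_ge: "Hf s \<ge> e"
  using k by (simp add: H_def)

lemma Hf_pos: "Hf s > 0"
  using Hf_ge[of s] e by linarith

lemma Hf_cont: "continuous_on S Hf"
  unfolding H_def using a
  by (intro continuous_intros continuous_on_powr') auto

lemma Hf_neg: "s \<le> 0 \<Longrightarrow> Hf s = k * (-s) powr (1+a) + e"
  by (simp add: H_def)

lemma invHf_cont: "continuous_on S (\<lambda>s. 1 / Hf s)"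
  using Hf_cont Hf_pos by (intro continuous_intros) (auto simp: less_imp_neq[symmetric])

lemma rh_within: "x \<in> {d..1} \<Longrightarrow> (rh has_real_derivative 1 / Hf x) (at x within {d..1})"
  unfolding rho_def[abs_def] by (rule integral_has_real_derivative[OF invHf_cont])

lemma rh_cont: "continuous_on {d..1} rh"
  unfolding continuous_on_eq_continuous_within using rh_within DERIV_continuous by blast

lemma rh_deriv: "d < x \<Longrightarrow> x < 1 \<Longrightarrow> (rh has_real_derivative 1 / Hf x) (at x)"
proof -
  assume x: "d < x" "x < 1"
  have "x \<in> interior {d..1}" using x by simp
  then have "at x within {d..1} = at x" by (rule at_within_interior)
  then show ?thesis using rh_within[of x] x by simp
qed

lemma rh_d: "rh d = 0"
  by (simp add: rho_def)

lemma rh_strict: "d \<le> x \<Longrightarrow> x < y \<Longrightarrow> y \<le> 1 \<Longrightarrow> rh x < rh y"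
  apply (rule DERIV_pos_imp_increasing_open[of x y])
    apply simp
  using rh_deriv Hf_pos apply (metis divide_pos_pos less_le_trans order_le_less_trans zero_less_one)
  using rh_cont by (rule continuous_on_subset) auto

lemma L_pos: "L > 0"
  using rh_strict[of d 0] d rh_d by (simp add: L_def)

lemma ell_eq: "ell k a d e = L"
proof -
  have "isCont rh 0" using rh_deriv[of 0] d DERIV_isCont by simp
  hence "(rh \<longlongrightarrow> rh 0) (at_left 0)"
    by (simp add: continuous_at filterlim_at_split)
  thus ?thesis unfolding ell_def L_def by (intro tendsto_Lim) auto
qed

lemma inj_rh: "inj_on rh {d..0}"
  by (rule strict_mono_on_imp_inj_on, auto simp: strict_mono_on_def intro!: rh_strict)

lemma rh_image: "rh ` {d..0} = {0..L}"
proof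
  show "rh ` {d..0} \<subseteq> {0..L}"
  proof
    fix y assume "y \<in> rh ` {d..0}"
    then obtain x where x: "x \<in> {d..0}" "y = rh x" by auto
    have "rh d \<le> rh x" using rh_strict[of d x] x by (cases "x = d") auto
    moreover have "rh x \<le> rh 0" using rh_strict[of x 0] x by (cases "x = 0") auto
    ultimately show "y \<in> {0..L}" using x rh_d by (auto simp: L_def)
  qed
next
  show "{0..L} \<subseteq> rh ` {d..0}"
  proof
    fix y assume y: "y \<in> {0..L}"
    have "\<exists>x\<ge>d. x \<le> 0 \<and> rh x = y"
      apply (rule IVT')
      using y rh_d d apply (auto simp: L_def)
      using rh_cont by (rule continuous_on_subset) auto
    thus "y \<in> rh ` {d..0}" by auto
  qed
qed

lemma mt_mem: "y \<in> {0..L} \<Longrightarrow> mt y \<in> {d..0}"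
  unfolding mt_def using rh_image by (metis inv_into_into)

lemma rh_mt: "y \<in> {0..L} \<Longrightarrow> rh (mt y) = y"
  unfolding mt_def using rh_image by (metis f_inv_into_f)

lemma mt_rh: "x \<in> {d..0} \<Longrightarrow> mt (rh x) = x"
  unfolding mt_def using inj_rh by (simp add: inv_into_f_f)

lemma mt_0: "mt 0 = d"
  using mt_rh[of d] d rh_d by simp

lemma mt_L: "mt L = 0"
  using mt_rh[of 0] d by (simp add: L_def)

lemma mt_neg: "y \<in> {0..<L} \<Longrightarrow> mt y < 0"
proof -
  assume y: "y \<in> {0..<L}"
  have m: "mt y \<in> {d..0}" "rh (mt y) = y" using y mt_mem[of y] rh_mt[of y] by auto
  have "mt y \<noteq> 0" using m y by (auto simp: L_def)
  then show ?thesis using m by auto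
qed

lemma mt_gt: "y \<in> {0<..L} \<Longrightarrow> mt y > d"
proof -
  assume y: "y \<in> {0<..L}"
  have m: "mt y \<in> {d..0}" "rh (mt y) = y" using y mt_mem[of y] rh_mt[of y] by auto
  have "mt y \<noteq> d" using m y rh_d by auto
  then show ?thesis using m by auto
qed

lemma mt_cont: "continuous_on {0..L} mt"
proof -
  have "continuous_on (rh ` {d..0}) mt"
    apply (rule continuous_on_inv)
    using rh_cont apply (rule continuous_on_subset) apply auto[1]
     apply simp
    using mt_rh by auto
  thus ?thesis using rh_image by simp
qed

lemma mt_deriv: "0 < y \<Longrightarrow> y < L \<Longrightarrow> (mt has_real_derivative Hf (mt y)) (at y)"
proof -
  assume y: "0 < y" "y < L"
  have "(mt has_real_derivative inverse (1 / Hf (mt y))) (at y)"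
  proof (rule DERIV_inverse_function[where a=0 and b=L])
    show "(rh has_real_derivative 1 / Hf (mt y)) (at (mt y))"
      using y mt_neg[of y] mt_gt[of y] by (intro rh_deriv) auto
    show "1 / Hf (mt y) \<noteq> 0" using Hf_pos[of "mt y"] by simp
    show "\<And>z. 0 < z \<Longrightarrow> z < L \<Longrightarrow> rh (mt z) = z" using rh_mt by auto
    show "isCont mt y" using mt_cont y
      by (metis continuous_on_interior interior_atLeastAtMost_real greaterThanLessThan_iff)
  qed (use y in auto)
  thus ?thesis by simp
qed

lemma mu_eq: "y \<in> {0..<L} \<Longrightarrow> mu k a d e y = mt y"
  unfolding mu_def
  apply (rule inv_into_f_eq)
  using inj_rh apply (rule inj_on_subset) apply auto[1]
  using mt_mem[of y] mt_neg[of y] apply auto[1]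
  using rh_mt by auto

end


lemma H0'_neg:
  assumes "s < 0" "a > 0"
  shows "H0' k a s = - k * (1 + a) * (-s) powr a"
proof -
  have "((\<lambda>t. k * (-t) powr (1 + a)) has_real_derivative k * ((1 + a) * (-s) powr (1 + a - 1) * (-1))) (at s)"
    using assms by (auto intro!: derivative_eq_intros)
  then have "((\<lambda>t. k * (-t) powr (1 + a)) has_real_derivative - k * (1 + a) * (-s) powr a) (at s)"
    by (simp add: mult.assoc)
  then have "(H k a 0 has_real_derivative - k * (1 + a) * (-s) powr a) (at s)"
    by (rule has_field_derivative_transform_within_open[where S="{..<0}"]) (use assms in \<open>auto simp: H_def\<close>)
  then show ?thesis unfolding H0'_def by (rule DERIV_imp_deriv)
qed

locale EPT = EP +
  fixes \<theta> :: "real \<Rightarrow> real"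
  assumes th_smooth: "smooth \<theta>" and th0: "\<forall>t \<le> 0. \<theta> t = 0" and th1: "\<forall>t \<ge> 1. \<theta> t = 1"
begin

definition "I t = integral {0..t} mt"
definition "p t = - mt t"
definition "V t = e - k * a * p t powr (1 + a)"
definition "V' t = k * a * (1 + a) * p t powr a * Hf (mt t)"
definition "hh t = - k * (1 + a) * p t powr a"
definition "T1 = deriv \<theta>"
definition "g1 x1 x2 = T1 x1 * (- I x1 + 1/2 * x2\<^sup>2 * V x1) + \<theta> x1 * (p x1 + 1/2 * x2\<^sup>2 * V' x1)"
definition "g2 x1 x2 = \<theta> x1 * x2 * V x1"
definition "Ep x = (g1 (fst x) (snd x) - snd x * hh (fst x) * g2 (fst x) (snd x))\<^sup>2 + (g2 (fst x) (snd x))\<^sup>2"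

lemma th_deriv: "(\<theta> has_real_derivative T1 t) (at t)"
  using th_smooth unfolding smooth_def T1_def
  by (metis DERIV_deriv_iff_real_differentiable funpow_0)

lemma T1_deriv: "(T1 has_real_derivative deriv T1 t) (at t)"
proof -
  have "((deriv ^^ 1) \<theta>) differentiable (at t)" using th_smooth unfolding smooth_def by blast
  then show ?thesis unfolding T1_def by (simp add: DERIV_deriv_iff_real_differentiable)
qed

lemma p_pos: "t \<in> {0..<L} \<Longrightarrow> p t > 0"
  using mt_neg by (simp add: p_def)

lemma mt_abs: "t \<in> {0..<L} \<Longrightarrow> \<bar>mt t\<bar> = p t"
  using mt_neg[of t] by (auto simp: p_def)

lemma Hf_mt: "t \<in> {0..<L} \<Longrightarrow> Hf (mt t) = k * p t powr (1 + a) + e"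
  using mt_abs by (simp add: H_def)

lemma us_eq:
  assumes t: "t \<in> {0..<L}"
  shows "us k a d \<theta> e (t, y) = \<theta> t * (- I t + 1/2 * y\<^sup>2 * V t)"
proof -
  have mu: "mu k a d e t = mt t" using mu_eq t by simp
  have I: "integral {0..t} (mu k a d e) = I t"
    unfolding I_def using t by (intro integral_cong) (auto simp: mu_eq)
  have pp: "p t > 0" using p_pos t by simp
  have "H k a e (mt t) - mt t * H0' k a (mt t) = V t"
  proof -
    have h0: "H0' k a (mt t) = - k * (1 + a) * p t powr a"
      using H0'_neg[of "mt t" a k] mt_neg t a by (simp add: p_def)
    have pw: "p t powr (1 + a) = p t * p t powr a" using pp by (simp add: powr_add)
    have m: "mt t = - p t" by (simp add: p_def)
    have hf: "Hf (mt t) = k * p t powr (1 + a) + e" using Hf_mt[OF t] .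
    have "H k a e (mt t) - mt t * H0' k a (mt t) = (k * p t powr (1 + a) + e) - mt t * (- k * (1 + a) * p t powr a)"
      by (simp only: hf h0)
    also have "\<dots> = V t" using pw m by (simp add: V_def algebra_simps)
    finally show ?thesis .
  qed
  then show ?thesis unfolding us_def using mu I by (simp add: Let_def)
qed

lemma I_deriv: "0 < t \<Longrightarrow> t < L \<Longrightarrow> (I has_real_derivative mt t) (at t)"
proof -
  assume t: "0 < t" "t < L"
  have "(I has_real_derivative mt t) (at t within {0..L})"
    unfolding I_def[abs_def] using t by (intro integral_has_real_derivative mt_cont) auto
  moreover have "at t within {0..L} = at t" using t by (intro at_within_interior) simp
  ultimately show ?thesis by simp
qed

lemma V_deriv: "0 < t \<Longrightarrow> t < L \<Longrightarrow> (V has_real_derivative V' t) (at t)"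
proof -
  assume t: "0 < t" "t < L"
  have pp: "p t > 0" using p_pos t by simp
  have "((\<lambda>t. e - k * a * (- mt t) powr (1 + a)) has_real_derivative
         0 - k * a * ((1 + a) * (- mt t) powr (1 + a - 1) * (- Hf (mt t)))) (at t)"
    using pp t by (auto intro!: derivative_eq_intros mt_deriv simp: p_def)
  moreover have "V = (\<lambda>t. e - k * a * (- mt t) powr (1 + a))" by (auto simp: V_def p_def fun_eq_iff)
  ultimately show ?thesis by (simp add: V'_def p_def mult.assoc)
qed

lemma grad2_2:
  assumes x: "fst x \<in> {0<..<L}"
  shows "grad2 (us k a d \<theta> e) x 2 = g2 (fst x) (snd x)"
proof -
  have eq: "(\<lambda>t. us k a d \<theta> e (fst x, t)) = (\<lambda>t. \<theta> (fst x) * (- I (fst x) + 1/2 * t\<^sup>2 * V (fst x)))"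
    using us_eq x by auto
  have "((\<lambda>t. \<theta> (fst x) * (- I (fst x) + 1/2 * t\<^sup>2 * V (fst x))) has_real_derivative
          \<theta> (fst x) * (0 + 1/2 * (2 * snd x ^ 1 * 1) * V (fst x))) (at (snd x))"
    by (auto intro!: derivative_eq_intros)
  then show ?thesis unfolding grad2_def eq g2_def
    by (auto dest!: DERIV_imp_deriv simp: algebra_simps)
qed

lemma grad2_1:
  assumes x: "fst x \<in> {0<..<L}"
  shows "grad2 (us k a d \<theta> e) x 1 = g1 (fst x) (snd x)"
proof -
  let ?y = "snd x" and ?t = "fst x"
  have "((\<lambda>t. \<theta> t * (- I t + 1/2 * ?y\<^sup>2 * V t)) has_real_derivative g1 ?t ?y) (at ?t)"
    unfolding g1_def p_def using x by (auto intro!: derivative_eq_intros th_deriv I_deriv V_deriv simp: algebra_simps)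
  then have "((\<lambda>t. us k a d \<theta> e (t, ?y)) has_real_derivative g1 ?t ?y) (at ?t)"
    apply (rule has_field_derivative_transform_within_open[where S="{0<..<L}"])
    using x us_eq by (auto simp: g1_def p_def)
  then show ?thesis unfolding grad2_def by (auto dest!: DERIV_imp_deriv)
qed

lemma energy_eq:
  assumes x: "fst x \<in> {0<..<L}"
  shows "energy_density k a d \<theta> e x = Ep x"
proof -
  have h: "H0' k a (mu k a d e (fst x)) = hh (fst x)"
    using x mu_eq[of "fst x"] mt_neg[of "fst x"] H0'_neg[of "mt (fst x)" a k] a
    by (simp add: hh_def p_def)
  show ?thesis
    unfolding energy_density_def Amat_def Let_def h Ep_def
    using grad2_1[OF x] grad2_2[OF x]
    by (simp add: power2_eq_square algebra_simps)
qed

end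


lemma abs_mult_le: "\<bar>x\<bar> \<le> (X::real) \<Longrightarrow> \<bar>y\<bar> \<le> Y \<Longrightarrow> \<bar>x * y\<bar> \<le> X * Y"
  by (simp add: abs_mult mult_mono')

lemma sq_le: "\<bar>x\<bar> \<le> (X::real) \<Longrightarrow> x\<^sup>2 \<le> X\<^sup>2"
  by (metis abs_ge_zero abs_le_square_iff order.trans abs_of_nonneg)

context EPT begin

definition "Pd = - d"
definition "PA = Pd powr a"
definition "M = k * Pd * PA + 1"

lemma p_nonneg: "t \<in> {0..L} \<Longrightarrow> p t \<ge> 0"
  using mt_mem by (force simp: p_def)

lemma p_le: "t \<in> {0..L} \<Longrightarrow> p t \<le> Pd"
  using mt_mem by (force simp: p_def Pd_def)

lemma mt_abs2: "t \<in> {0..L} \<Longrightarrow> \<bar>mt t\<bar> = p t"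
  using mt_mem[of t] by (auto simp: p_def)

lemma Hf_mt': "t \<in> {0..L} \<Longrightarrow> Hf (mt t) = k * p t powr (1 + a) + e"
  using mt_mem[of t] by (simp add: H_def p_def)

lemma ppow: "t \<in> {0..L} \<Longrightarrow> p t powr (1 + a) = p t * p t powr a"
  using p_nonneg[of t] a
  by (cases "p t = 0") (auto simp: powr_add)

lemma A_le: "t \<in> {0..L} \<Longrightarrow> p t powr a \<le> PA"
  unfolding PA_def using p_nonneg p_le a by (intro powr_mono2) auto

lemma PA_nonneg: "PA \<ge> 0" by (simp add: PA_def)
lemma Pd_pos: "Pd > 0" using d by (simp add: Pd_def)

lemma Hp_le: "t \<in> {0..L} \<Longrightarrow> e \<le> 1 \<Longrightarrow> Hf (mt t) \<le> M"
proof -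
  assume t: "t \<in> {0..L}" and e1: "e \<le> 1"
  have "p t * p t powr a \<le> Pd * PA"
    using p_nonneg[OF t] p_le[OF t] A_le[OF t] PA_nonneg by (intro mult_mono) auto
  then have "k * (p t * p t powr a) \<le> k * (Pd * PA)" using k by (intro mult_left_mono) auto
  then show ?thesis using Hf_mt'[OF t] ppow[OF t] e1 by (simp add: M_def mult.assoc)
qed

lemma V_le: "t \<in> {0..L} \<Longrightarrow> \<bar>V t\<bar> \<le> (1 + a) * Hf (mt t)"
proof -
  assume t: "t \<in> {0..L}"
  have pq: "p t powr (1 + a) \<ge> 0" by simp
  show ?thesis unfolding V_def Hf_mt'[OF t] using pq e a k
    by (simp add: abs_le_iff algebra_simps)
qed

lemma V'_le: "t \<in> {0..L} \<Longrightarrow> \<bar>V' t\<bar> \<le> k * a * (1 + a) * PA * Hf (mt t)"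
proof -
  assume t: "t \<in> {0..L}"
  have "\<bar>V' t\<bar> = k * a * (1 + a) * p t powr a * Hf (mt t)"
    unfolding V'_def using k a Hf_pos[of "mt t"] by (simp add: abs_mult)
  also have "\<dots> \<le> k * a * (1 + a) * PA * Hf (mt t)"
    using A_le[OF t] k a Hf_pos[of "mt t"] by (intro mult_right_mono mult_left_mono) auto
  finally show ?thesis .
qed

lemma hh_le: "t \<in> {0..L} \<Longrightarrow> \<bar>hh t\<bar> \<le> k * (1 + a) * PA"
proof -
  assume t: "t \<in> {0..L}"
  have "\<bar>hh t\<bar> = k * (1 + a) * p t powr a" unfolding hh_def using k a by (simp add: abs_mult)
  also have "\<dots> \<le> k * (1 + a) * PA" using A_le[OF t] k a by (intro mult_left_mono) auto
  finally show ?thesis .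
qed

lemma I_le: "t \<in> {0..L} \<Longrightarrow> \<bar>I t\<bar> \<le> Pd * t"
proof -
  assume t: "t \<in> {0..L}"
  have "norm (integral {0..t} mt) \<le> integral {0..t} (\<lambda>_. Pd)"
    apply (rule integral_norm_bound_integral)
    using mt_cont t apply (intro integrable_continuous_real) apply (rule continuous_on_subset) apply auto[2]
    using t mt_abs2 p_le by auto
  then show ?thesis using t by (simp add: I_def mult.commute)
qed

end


context EPT begin

lemma th_one: "t \<ge> 1 \<Longrightarrow> \<theta> t = 1" using th1 by auto

lemma T1_zero_gt: "t > 1 \<Longrightarrow> T1 t = 0"
proof -
  assume t: "t > 1"
  have "((\<lambda>_. 1::real) has_real_derivative 0) (at t)" by simp
  then have "(\<theta> has_real_derivative 0) (at t)"
    by (rule has_field_derivative_transform_within_open[where S="{1<..}"]) (use t th_one in auto)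
  then show ?thesis using th_deriv[of t] DERIV_unique by blast
qed

lemma T1_zero: "t \<ge> 1 \<Longrightarrow> T1 t = 0"
proof (cases "t = 1")
  case True
  have "isCont T1 1" using T1_deriv DERIV_isCont by blast
  then have "(T1 \<longlongrightarrow> T1 1) (at_right 1)" by (simp add: continuous_at filterlim_at_split)
  moreover have "(T1 \<longlongrightarrow> 0) (at_right 1)"
  proof (rule tendsto_eventually)
    show "\<forall>\<^sub>F x in at_right 1. T1 x = 0"
      by (rule eventually_at_right_less[THEN eventually_mono]) (auto intro: T1_zero_gt)
  qed
  ultimately have "T1 1 = 0" by (rule tendsto_unique[rotated 1]) simp
  then show ?thesis using True by simp
qed (auto intro: T1_zero_gt)

definition "c0 = k * (1 + a) * PA * (a/2 + 1 + a)"
definition "Cc = 2 * Pd * c0 + c0\<^sup>2 * M + (1 + a)\<^sup>2 * M"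
definition "Vb = (1 + a) * M"
definition "V'b = k * a * (1 + a) * PA * M"
definition "Hb = k * (1 + a) * PA"
definition "G1 B0 B1 = B1 * (Pd + Vb/2) + B0 * (Pd + V'b/2)"
definition "G2 B0 = B0 * Vb"
definition "Kc B0 B1 = (G1 B0 B1 + Hb * G2 B0)\<^sup>2 + (G2 B0)\<^sup>2 + Pd\<^sup>2"

lemma M_pos: "M \<ge> 1" unfolding M_def using k Pd_pos PA_nonneg by simp

lemma c0_nonneg: "c0 \<ge> 0" unfolding c0_def using k a PA_nonneg by simp

lemma Cc_nonneg: "Cc \<ge> 0" unfolding Cc_def using c0_nonneg Pd_pos M_pos by simp

lemma Kc_nonneg: "Kc B0 B1 \<ge> 0" unfolding Kc_def by simp

lemma Ep_bound_ge1:
  assumes e1: "e \<le> 1" and x1: "x1 \<in> {0..L}" "x1 \<ge> 1" and y: "y \<in> {0..1}"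
  shows "\<bar>Ep (x1, y) - (mt x1)\<^sup>2\<bar> \<le> Cc * Hf (mt x1)"
proof -
  define P where "P = p x1"
  define HH where "HH = Hf (mt x1)"
  define VV where "VV = V x1"
  define VV' where "VV' = V' x1"
  define h where "h = hh x1"
  define c where "c = 1/2 * y\<^sup>2 * VV' - y\<^sup>2 * h * VV"
  have HHpos: "HH > 0" unfolding HH_def using Hf_pos .
  have HHM: "HH \<le> M" unfolding HH_def using Hp_le[OF x1(1) e1] .
  have P0: "0 \<le> P" "P \<le> Pd" unfolding P_def using p_nonneg[OF x1(1)] p_le[OF x1(1)] by auto
  have y2: "0 \<le> y\<^sup>2" "y\<^sup>2 \<le> 1" using y by (auto simp: power_le_one)
  have Ep: "Ep (x1, y) = (P + c)\<^sup>2 + y\<^sup>2 * VV\<^sup>2"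
    unfolding Ep_def g1_def g2_def c_def P_def VV_def VV'_def h_def
    using th_one[OF x1(2)] T1_zero[OF x1(2)] by (simp add: power2_eq_square algebra_simps)
  have mt2: "(mt x1)\<^sup>2 = P\<^sup>2" unfolding P_def p_def by simp
  have hV: "\<bar>VV\<bar> \<le> (1 + a) * HH" unfolding VV_def HH_def using V_le[OF x1(1)] .
  have hV': "\<bar>VV'\<bar> \<le> k * a * (1 + a) * PA * HH" unfolding VV'_def HH_def using V'_le[OF x1(1)] .
  have hh: "\<bar>h\<bar> \<le> k * (1 + a) * PA" unfolding h_def using hh_le[OF x1(1)] .
  have c1: "\<bar>1/2 * y\<^sup>2 * VV'\<bar> \<le> 1/2 * (k * a * (1 + a) * PA * HH)"
  proof -
    have "\<bar>1/2 * y\<^sup>2 * VV'\<bar> = 1/2 * y\<^sup>2 * \<bar>VV'\<bar>" by (simp add: abs_mult)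
    also have "\<dots> \<le> 1/2 * 1 * \<bar>VV'\<bar>" using y2 by (intro mult_right_mono mult_left_mono) auto
    finally show ?thesis using hV' by simp
  qed
  have c2: "\<bar>y\<^sup>2 * h * VV\<bar> \<le> k * (1 + a) * PA * ((1 + a) * HH)"
  proof -
    have "\<bar>y\<^sup>2 * h * VV\<bar> = y\<^sup>2 * (\<bar>h\<bar> * \<bar>VV\<bar>)" by (simp add: abs_mult)
    also have "\<dots> \<le> 1 * (\<bar>h\<bar> * \<bar>VV\<bar>)" using y2 by (intro mult_right_mono) auto
    also have "\<dots> \<le> k * (1 + a) * PA * ((1 + a) * HH)" using abs_mult_le[OF hh hV] by (simp add: abs_mult)
    finally show ?thesis .
  qed
  have cb: "\<bar>c\<bar> \<le> c0 * HH"
  proof -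
    have "\<bar>c\<bar> \<le> \<bar>1/2 * y\<^sup>2 * VV'\<bar> + \<bar>y\<^sup>2 * h * VV\<bar>" unfolding c_def by (rule abs_triangle_ineq4)
    also have "\<dots> \<le> 1/2 * (k * a * (1 + a) * PA * HH) + k * (1 + a) * PA * ((1 + a) * HH)"
      using c1 c2 by linarith
    also have "\<dots> = c0 * HH" unfolding c0_def by (simp add: algebra_simps)
    finally show ?thesis .
  qed
  have "\<bar>Ep (x1, y) - (mt x1)\<^sup>2\<bar> = \<bar>2 * P * c + c\<^sup>2 + y\<^sup>2 * VV\<^sup>2\<bar>"
    unfolding Ep mt2 by (simp add: power2_eq_square algebra_simps)
  also have "\<dots> \<le> \<bar>2 * P * c\<bar> + c\<^sup>2 + y\<^sup>2 * VV\<^sup>2"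
    by (smt (verit, best) zero_le_power2 mult_nonneg_nonneg y2(1))
  also have "\<dots> \<le> 2 * Pd * c0 * HH + c0\<^sup>2 * M * HH + (1 + a)\<^sup>2 * M * HH"
  proof -
    have a1: "\<bar>2 * P * c\<bar> \<le> 2 * Pd * (c0 * HH)"
    proof -
      have "\<bar>2 * P * c\<bar> = 2 * P * \<bar>c\<bar>" using P0 by (simp add: abs_mult)
      also have "\<dots> \<le> 2 * Pd * (c0 * HH)" using P0 cb by (intro mult_mono) auto
      finally show ?thesis .
    qed
    have a2: "c\<^sup>2 \<le> c0\<^sup>2 * M * HH"
    proof -
      have "c\<^sup>2 \<le> (c0 * HH)\<^sup>2" using sq_le[OF cb] .
      also have "\<dots> = c0\<^sup>2 * HH * HH" by (simp add: power2_eq_square)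
      also have "\<dots> \<le> c0\<^sup>2 * M * HH" using HHM HHpos by (intro mult_right_mono mult_left_mono) auto
      finally show ?thesis .
    qed
    have a3: "y\<^sup>2 * VV\<^sup>2 \<le> (1 + a)\<^sup>2 * M * HH"
    proof -
      have "y\<^sup>2 * VV\<^sup>2 \<le> 1 * VV\<^sup>2" using y2 by (intro mult_right_mono) auto
      also have "\<dots> \<le> ((1 + a) * HH)\<^sup>2" using sq_le[OF hV] by simp
      also have "\<dots> = (1 + a)\<^sup>2 * HH * HH" by (simp add: power2_eq_square)
      also have "\<dots> \<le> (1 + a)\<^sup>2 * M * HH" using HHM HHpos by (intro mult_right_mono mult_left_mono) auto
      finally show ?thesis .
    qed
    show ?thesis using a1 a2 a3 by (simp add: mult.assoc)
  qed
  also have "\<dots> = Cc * HH" unfolding Cc_def by (simp add: algebra_simps)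
  finally show ?thesis unfolding HH_def .
qed

end


lemma abc_le: "0 \<le> (A::real) \<Longrightarrow> 0 \<le> B \<Longrightarrow> 0 \<le> C \<Longrightarrow> A \<le> A' \<Longrightarrow> B \<le> B' \<Longrightarrow> C \<le> C'
  \<Longrightarrow> \<bar>A + B - C\<bar> \<le> A' + B' + C'"
  by (simp add: abs_le_iff)

context EPT begin

lemma Ep_bound_le1:
  assumes e1: "e \<le> 1" and x1: "x1 \<in> {0..L}" "x1 \<le> 1" and y: "y \<in> {0..1}"
    and B0: "\<forall>t\<in>{0..1}. \<bar>\<theta> t\<bar> \<le> B0" and B1: "\<forall>t\<in>{0..1}. \<bar>T1 t\<bar> \<le> B1"
  shows "\<bar>Ep (x1, y) - (mt x1)\<^sup>2\<bar> \<le> Kc B0 B1"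
proof -
  define P where "P = p x1"
  define HH where "HH = Hf (mt x1)"
  have x1': "x1 \<in> {0..1}" using x1 by auto
  have th: "\<bar>\<theta> x1\<bar> \<le> B0" and t1: "\<bar>T1 x1\<bar> \<le> B1" using B0 B1 x1' by auto
  have B0p: "B0 \<ge> 0" and B1p: "B1 \<ge> 0" using th t1 by linarith+
  have HHpos: "HH > 0" unfolding HH_def using Hf_pos .
  have HHM: "HH \<le> M" unfolding HH_def using Hp_le[OF x1(1) e1] .
  have P0: "0 \<le> P" "P \<le> Pd" unfolding P_def using p_nonneg[OF x1(1)] p_le[OF x1(1)] by auto
  have y2: "0 \<le> y\<^sup>2" "y\<^sup>2 \<le> 1" using y by (auto simp: power_le_one)
  have ya: "\<bar>y\<bar> \<le> 1" using y by auto
  have hV: "\<bar>V x1\<bar> \<le> Vb"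
    using V_le[OF x1(1)] HHM a unfolding Vb_def HH_def
    by (smt (verit) mult_left_mono)
  have hV': "\<bar>V' x1\<bar> \<le> V'b"
  proof -
    have "k * a * (1 + a) * PA * HH \<le> k * a * (1 + a) * PA * M"
      using HHM k a PA_nonneg by (intro mult_left_mono) auto
    then show ?thesis using V'_le[OF x1(1)] unfolding V'b_def HH_def by linarith
  qed
  have hh: "\<bar>y * hh x1\<bar> \<le> Hb"
    using abs_mult_le[OF ya hh_le[OF x1(1)]] unfolding Hb_def by simp
  have hI: "\<bar>I x1\<bar> \<le> Pd"
    using I_le[OF x1(1)] x1 Pd_pos by (smt (verit) mult_left_le)
  have Vbp: "Vb \<ge> 0" using \<open>\<bar>V x1\<bar> \<le> Vb\<close> by linarith
  have V'bp: "V'b \<ge> 0" using hV' by linarith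
  have q1: "\<bar>- I x1 + 1/2 * y\<^sup>2 * V x1\<bar> \<le> Pd + Vb/2"
  proof -
    have "\<bar>1/2 * y\<^sup>2 * V x1\<bar> \<le> 1/2 * (1 * Vb)"
      using abs_mult_le[of "y\<^sup>2" 1 "V x1" Vb] y2 hV by (simp add: abs_mult)
    then show ?thesis using hI by linarith
  qed
  have q2: "\<bar>p x1 + 1/2 * y\<^sup>2 * V' x1\<bar> \<le> Pd + V'b/2"
  proof -
    have "\<bar>1/2 * y\<^sup>2 * V' x1\<bar> \<le> 1/2 * (1 * V'b)"
      using abs_mult_le[of "y\<^sup>2" 1 "V' x1" V'b] y2 hV' by (simp add: abs_mult)
    then show ?thesis using P0 unfolding P_def by linarith
  qed
  have g1b: "\<bar>g1 x1 y\<bar> \<le> G1 B0 B1"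
    unfolding g1_def G1_def
    using abs_mult_le[OF t1 q1] abs_mult_le[OF th q2] by linarith
  have g2b: "\<bar>g2 x1 y\<bar> \<le> G2 B0"
  proof -
    have "\<bar>\<theta> x1 * y\<bar> \<le> B0 * 1" using abs_mult_le[OF th ya] .
    from abs_mult_le[OF this hV] show ?thesis unfolding g2_def G2_def by simp
  qed
  have "\<bar>g1 x1 y - y * hh x1 * g2 x1 y\<bar> \<le> G1 B0 B1 + Hb * G2 B0"
    using g1b abs_mult_le[OF hh g2b] by linarith
  then have e1b: "(g1 x1 y - y * hh x1 * g2 x1 y)\<^sup>2 \<le> (G1 B0 B1 + Hb * G2 B0)\<^sup>2" by (rule sq_le)
  have e2b: "(g2 x1 y)\<^sup>2 \<le> (G2 B0)\<^sup>2" using sq_le[OF g2b] .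
  have "(mt x1)\<^sup>2 \<le> Pd\<^sup>2"
    using sq_le[of "mt x1" Pd] mt_abs2[OF x1(1)] P0 unfolding P_def by simp
  then show ?thesis unfolding Ep_def Kc_def fst_conv snd_conv
    by (rule abc_le[OF zero_le_power2 zero_le_power2 zero_le_power2 e1b e2b])
qed

lemma Ep_bound:
  assumes e1: "e \<le> 1" and x1: "x1 \<in> {0..L}" and y: "y \<in> {0..1}"
    and B0: "\<forall>t\<in>{0..1}. \<bar>\<theta> t\<bar> \<le> B0" and B1: "\<forall>t\<in>{0..1}. \<bar>T1 t\<bar> \<le> B1"
  shows "\<bar>Ep (x1, y) - (mt x1)\<^sup>2\<bar> \<le> 4 * Kc B0 B1 / (1 + x1)\<^sup>2 + Cc * Hf (mt x1)"
proof -
  have CH: "Cc * Hf (mt x1) \<ge> 0" using Cc_nonneg Hf_pos[of "mt x1"] by simp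
  have x0: "x1 \<ge> 0" using x1 by simp
  have fr: "4 * Kc B0 B1 / (1 + x1)\<^sup>2 \<ge> 0" using Kc_nonneg by simp
  show ?thesis
  proof (cases "x1 \<le> 1")
    case True
    have "(1 + x1)\<^sup>2 \<le> 2\<^sup>2" using True x0 by (intro power_mono) auto
    then have "Kc B0 B1 * (1 + x1)\<^sup>2 \<le> Kc B0 B1 * 4"
      using Kc_nonneg by (intro mult_left_mono) auto
    then have "Kc B0 B1 \<le> 4 * Kc B0 B1 / (1 + x1)\<^sup>2"
      using x0 by (simp add: field_simps)
    then show ?thesis using Ep_bound_le1[OF e1 x1 True y B0 B1] CH by linarith
  next
    case False
    then show ?thesis using Ep_bound_ge1[OF e1 x1 _ y] fr by simp
  qed
qed

end


context EPT begin

lemma cont_p: "continuous_on {0..L} p"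
  unfolding p_def[abs_def] using mt_cont by (intro continuous_intros)

lemma cont_Hmt: "continuous_on {0..L} (\<lambda>t. Hf (mt t))"
  using continuous_on_compose2[OF Hf_cont mt_cont, of UNIV] by simp

lemma cont_I: "continuous_on {0..L} I"
  unfolding I_def[abs_def] by (intro indefinite_integral_continuous_1 integrable_continuous_real mt_cont)

lemma cont_ppow: "b > 0 \<Longrightarrow> continuous_on {0..L} (\<lambda>t. p t powr b)"
  using cont_p p_nonneg by (intro continuous_on_powr' continuous_intros) auto

lemma cont_V: "continuous_on {0..L} V"
  unfolding V_def[abs_def] using a
  by (intro continuous_on_diff[OF continuous_on_const continuous_on_mult[OF continuous_on_const cont_ppow]]) auto

lemma cont_V': "continuous_on {0..L} V'"
  unfolding V'_def[abs_def] using a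
  by (intro continuous_on_mult[OF continuous_on_mult[OF continuous_on_const cont_ppow] cont_Hmt])

lemma cont_hh: "continuous_on {0..L} hh"
  unfolding hh_def[abs_def] using a
  by (intro continuous_on_mult[OF continuous_on_const cont_ppow])

lemma cont_th: "continuous_on S \<theta>"
  using th_deriv DERIV_isCont continuous_at_imp_continuous_on by blast

lemma cont_T1: "continuous_on S T1"
  using T1_deriv DERIV_isCont continuous_at_imp_continuous_on by blast

abbreviation "CB \<equiv> cbox (0::real, 0::real) (L, 1)"

lemma cfst: "continuous_on {0..L} f \<Longrightarrow> continuous_on CB (\<lambda>x. f (fst x))"
  by (rule continuous_on_compose2[of "{0..L}" f CB fst]) (auto intro: continuous_intros simp: cbox_Pair_eq)

lemma Ep_cont: "continuous_on CB Ep"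
proof -
  note c = cfst[OF cont_I] cfst[OF cont_V] cfst[OF cont_V'] cfst[OF cont_hh] cfst[OF cont_p]
    cfst[OF cont_th] cfst[OF cont_T1]
  show ?thesis unfolding Ep_def g1_def g2_def
    by (intro continuous_intros c)
qed

lemma Rect_box: "Rect k a d e = box (0, 0) (L, 1)"
  by (auto simp: Rect_def ell_eq box_def Basis_prod_def inner_prod_def)

lemma Rect_sub: "Rect k a d e \<subseteq> CB"
  unfolding Rect_box by (rule box_subset_cbox)

lemma Rect_sets: "Rect k a d e \<in> sets lborel"
  unfolding Rect_box by simp

lemma energy_on_Rect: "x \<in> Rect k a d e \<Longrightarrow> energy_density k a d \<theta> e x = Ep x"
  by (rule energy_eq) (auto simp: Rect_def ell_eq mem_Times_iff)

lemma energy_integrable: "set_integrable lborel (Rect k a d e) (energy_density k a d \<theta> e)"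
proof -
  have "set_integrable lborel CB Ep"
    unfolding set_integrable_def by (intro borel_integrable_compact compact_cbox Ep_cont)
  then have "set_integrable lborel (Rect k a d e) Ep"
    by (rule set_integrable_subset[OF _ Rect_sets Rect_sub])
  then show ?thesis
    by (rule set_integrable_cong[THEN iffD1, rotated 3]) (auto simp: energy_on_Rect)
qed

lemma energy_LINT: "(LINT x : Rect k a d e | lborel. energy_density k a d \<theta> e x) = integral CB Ep"
proof -
  have "(LINT x : Rect k a d e | lborel. energy_density k a d \<theta> e x) = (LINT x : Rect k a d e | lborel. Ep x)"
    by (rule set_lebesgue_integral_cong[OF Rect_sets]) (auto simp: energy_on_Rect)
  also have "\<dots> = integral (Rect k a d e) Ep"
  proof (rule set_borel_integral_eq_integral)
    have "set_integrable lborel CB Ep"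
      unfolding set_integrable_def by (intro borel_integrable_compact compact_cbox Ep_cont)
    then show "set_integrable lborel (Rect k a d e) Ep"
      by (rule set_integrable_subset[OF _ Rect_sets Rect_sub])
  qed
  also have "\<dots> = integral CB Ep" unfolding Rect_box by (rule integral_open_interval)
  finally show ?thesis .
qed

lemma integral_fst: "continuous_on {0..L} (f :: real \<Rightarrow> real) \<Longrightarrow> integral CB (\<lambda>x. f (fst x)) = integral {0..L} f"
proof -
  assume f: "continuous_on {0..L} f"
  show ?thesis using integral_prod_continuous[OF cfst[OF f]] by simp
qed

lemma int_inv_sq: "integral {0..L} (\<lambda>t. 1 / (1 + t)\<^sup>2) \<le> 1"
proof -
  have "((\<lambda>t. 1 / (1 + t)\<^sup>2) has_integral ((- 1 / (1 + L)) - (- 1 / (1 + 0)))) {0..L}"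
  proof (rule fundamental_theorem_of_calculus)
    show "0 \<le> L" using L_pos by simp
    fix t assume t: "t \<in> {0..L}"
    have "((\<lambda>t. - 1 / (1 + t)) has_real_derivative 1 / (1 + t)\<^sup>2) (at t within {0..L})"
      using t by (auto intro!: derivative_eq_intros simp: power2_eq_square field_simps)
    then show "((\<lambda>t. - 1 / (1 + t)) has_vector_derivative 1 / (1 + t)\<^sup>2) (at t within {0..L})"
      by (simp add: has_real_derivative_iff_has_vector_derivative)
  qed
  then have "integral {0..L} (\<lambda>t. 1 / (1 + t)\<^sup>2) = 1 - 1 / (1 + L)" by (simp add: integral_unique)
  then show ?thesis using L_pos by simp
qed

lemma int_Hmt: "integral {0..L} (\<lambda>t. Hf (mt t)) = Pd"
proof -
  have "((\<lambda>t. Hf (mt t)) has_integral (mt L - mt 0)) {0..L}"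
  proof (rule fundamental_theorem_of_calculus_interior)
    show "0 \<le> L" using L_pos by simp
    show "continuous_on {0..L} mt" by (rule mt_cont)
    fix t assume "t \<in> {0<..<L}"
    then show "(mt has_vector_derivative Hf (mt t)) (at t)"
      using mt_deriv by (simp add: has_real_derivative_iff_has_vector_derivative)
  qed
  then show ?thesis using mt_0 mt_L by (simp add: integral_unique Pd_def)
qed

lemma energy_close:
  assumes e1: "e \<le> 1"
    and B0: "\<forall>t\<in>{0..1}. \<bar>\<theta> t\<bar> \<le> B0" and B1: "\<forall>t\<in>{0..1}. \<bar>T1 t\<bar> \<le> B1"
  shows "\<bar>(LINT x : Rect k a d e | lborel. energy_density k a d \<theta> e x) - integral {0..L} (\<lambda>t. (mt t)\<^sup>2)\<bar>
           \<le> 4 * Kc B0 B1 + Cc * Pd"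
proof -
  define B where "B t = 4 * Kc B0 B1 * (1 / (1 + t)\<^sup>2) + Cc * Hf (mt t)" for t
  have cB: "continuous_on {0..L} B" unfolding B_def
    using cont_Hmt by (intro continuous_intros) (auto simp: add_nonneg_eq_0_iff)
  have cm: "continuous_on {0..L} (\<lambda>t. (mt t)\<^sup>2)" using mt_cont by (intro continuous_intros)
  have i1: "Ep integrable_on CB" by (intro integrable_continuous Ep_cont)
  have i2: "(\<lambda>x. (mt (fst x))\<^sup>2) integrable_on CB" by (intro integrable_continuous cfst cm)
  have i3: "(\<lambda>x. B (fst x)) integrable_on CB" by (intro integrable_continuous cfst cB)
  have "\<bar>integral CB Ep - integral CB (\<lambda>x. (mt (fst x))\<^sup>2)\<bar> = norm (integral CB (\<lambda>x. Ep x - (mt (fst x))\<^sup>2))"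
    using integral_diff[OF i1 i2] by simp
  also have "\<dots> \<le> integral CB (\<lambda>x. B (fst x))"
  proof (rule integral_norm_bound_integral)
    show "(\<lambda>x. Ep x - (mt (fst x))\<^sup>2) integrable_on CB" using i1 i2 by (rule integrable_diff)
    show "(\<lambda>x. B (fst x)) integrable_on CB" by (rule i3)
    fix x assume "x \<in> CB"
    then obtain x1 y where x: "x = (x1, y)" "x1 \<in> {0..L}" "y \<in> {0..1}"
      by (cases x) (auto simp: cbox_Pair_eq)
    show "norm (Ep x - (mt (fst x))\<^sup>2) \<le> B (fst x)"
      using Ep_bound[OF e1 x(2) x(3) B0 B1] unfolding x B_def by simp
  qed
  also have "\<dots> = integral {0..L} B" by (rule integral_fst[OF cB])
  also have "\<dots> = 4 * Kc B0 B1 * integral {0..L} (\<lambda>t. 1 / (1 + t)\<^sup>2) + Cc * integral {0..L} (\<lambda>t. Hf (mt t))"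
  proof -
    have c1: "continuous_on {0..L} (\<lambda>t. 1 / (1 + t)\<^sup>2)"
      by (intro continuous_intros) (auto simp: add_nonneg_eq_0_iff)
    have "integral {0..L} B = integral {0..L} (\<lambda>t. 4 * Kc B0 B1 * (1 / (1 + t)\<^sup>2)) + integral {0..L} (\<lambda>t. Cc * Hf (mt t))"
      unfolding B_def
      by (rule integral_add[OF integrable_continuous_real[OF continuous_on_mult[OF continuous_on_const c1]]
                integrable_continuous_real[OF continuous_on_mult[OF continuous_on_const cont_Hmt]]])
    then show ?thesis by (simp only: integral_mult_right)
  qed
  also have "\<dots> \<le> 4 * Kc B0 B1 * 1 + Cc * Pd"
    using mult_left_mono[OF int_inv_sq Kc_nonneg[of B0 B1]] int_Hmt by simp
  finally show ?thesis using energy_LINT integral_fst[OF cm] by simp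
qed

end


lemma key_alg:
  fixes t k e q s :: real
  assumes t: "t > 0" and k: "k > 0" and e: "e > 0" and q: "q > 0" and sq: "s * q = 3"
  defines "X \<equiv> t powr q"
  defines "Hh \<equiv> k * X + e"
  shows "(1/q) * k powr (-s) * e powr (s-1) * ((k * X / Hh) powr (s-1) * (e / Hh) powr (-s))
          * (k * q * t powr (q - 1) * e / Hh\<^sup>2) = t\<^sup>2 / Hh"
proof -
  have X: "X > 0" unfolding X_def using t by simp
  have H: "Hh > 0" unfolding Hh_def using X k e by (simp add: add_pos_pos)
  have "ln ((1/q) * k powr (-s) * e powr (s-1) * ((k * X / Hh) powr (s-1) * (e / Hh) powr (-s))
          * (k * q * t powr (q - 1) * e / Hh\<^sup>2)) =
        - ln q + (-s) * ln k + (s-1) * ln e + ((s-1) * (ln k + q * ln t - ln Hh) + (-s) * (ln e - ln Hh))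
          + (ln k + ln q + (q - 1) * ln t + ln e - 2 * ln Hh)"
    using X H k e q t
    by (simp add: ln_mult ln_div ln_powr X_def ln_inverse power2_eq_square)
  also have "\<dots> = 2 * ln t - ln Hh"
  proof -
    have "(s - 1) * (q * ln t) + (q - 1) * ln t = (s * q - 1) * ln t" by (simp add: algebra_simps)
    then show ?thesis using sq by (simp add: algebra_simps)
  qed
  also have "\<dots> = ln (t\<^sup>2 / Hh)" using t H by (simp add: ln_div ln_mult power2_eq_square)
  finally show ?thesis
    using X H k e q t by (subst (asm) ln_inj_iff) (auto intro!: mult_pos_pos divide_pos_pos)
qed

definition gB :: "real \<Rightarrow> real \<Rightarrow> real" where
  "gB s w = w powr (s - 1) * (1 - w) powr (- s)"

definition Gi :: "real \<Rightarrow> real \<Rightarrow> real" where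
  "Gi s w = integral {0..w} (gB s)"

lemma gB_integrable: "0 < s \<Longrightarrow> s < 1 \<Longrightarrow> gB s integrable_on {0..1}"
  using integrable_Beta'[of s "1 - s"] by (simp add: gB_def[abs_def])

lemma Gi_1: "0 < s \<Longrightarrow> s < 1 \<Longrightarrow> Gi s 1 = Beta s (1 - s)"
  using has_integral_Beta_real[of s "1 - s"] unfolding Gi_def gB_def[abs_def]
  by (simp add: integral_unique)

lemma Gi_cont: "0 < s \<Longrightarrow> s < 1 \<Longrightarrow> continuous_on {0..1} (Gi s)"
  unfolding Gi_def[abs_def] by (intro indefinite_integral_continuous_1 gB_integrable)

lemma Gi_deriv:
  assumes s: "0 < s" "s < 1" and w: "0 < w" "w < 1"
  shows "(Gi s has_real_derivative gB s w) (at w)"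
proof -
  have c: "isCont (gB s) w"
    unfolding gB_def[abs_def] using w by (intro continuous_intros) auto
  have "((\<lambda>u. integral {0..u} (gB s)) has_vector_derivative gB s w) (at w within ({0..1} - {}))"
    by (rule integral_has_vector_derivative_continuous_at[OF gB_integrable[OF s]])
       (use w c in \<open>auto intro: continuous_at_imp_continuous_within\<close>)
  moreover have "at w within ({0..1} - {}) = at w"
    using w by (intro at_within_interior) auto
  ultimately show ?thesis
    unfolding Gi_def[abs_def] by (simp add: has_real_derivative_iff_has_vector_derivative)
qed

context EP begin

lemma main_ftc:
  assumes cont: "continuous_on {d..0} \<Psi>"
    and der: "\<And>\<xi>. d < \<xi> \<Longrightarrow> \<xi> < 0 \<Longrightarrow> (\<Psi> has_real_derivative \<xi>\<^sup>2 / Hf \<xi>) (at \<xi>)"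
  shows "integral {0..L} (\<lambda>t. (mt t)\<^sup>2) = \<Psi> 0 - \<Psi> d"
proof -
  have "((\<lambda>t. (mt t)\<^sup>2) has_integral (\<Psi> (mt L) - \<Psi> (mt 0))) {0..L}"
  proof (rule fundamental_theorem_of_calculus_interior)
    show "0 \<le> L" using L_pos by simp
    show "continuous_on {0..L} (\<lambda>t. \<Psi> (mt t))"
      by (rule continuous_on_compose2[OF cont mt_cont]) (use mt_mem in auto)
    fix t assume t: "t \<in> {0<..<L}"
    have m: "d < mt t" "mt t < 0" using mt_gt[of t] mt_neg[of t] t by auto
    have "((\<lambda>t. \<Psi> (mt t)) has_real_derivative (mt t)\<^sup>2 / Hf (mt t) * Hf (mt t)) (at t)"
      using DERIV_chain2[OF der[OF m] mt_deriv] t by auto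
    then show "((\<lambda>t. \<Psi> (mt t)) has_vector_derivative (mt t)\<^sup>2) (at t)"
      using Hf_pos[of "mt t"] by (simp add: has_real_derivative_iff_has_vector_derivative)
  qed
  then show ?thesis using mt_0 mt_L by (simp add: integral_unique)
qed

lemma main_2:
  assumes a2: "a = 2"
  shows "integral {0..L} (\<lambda>t. (mt t)\<^sup>2) = 1 / (3 * k) * (ln (k * (- d) powr 3 + e) - ln e)"
proof -
  define \<Psi> where "\<Psi> \<xi> = - 1 / (3 * k) * ln (k * (- \<xi>) powr 3 + e)" for \<xi>
  have pos: "k * (- \<xi>) powr 3 + e > 0" for \<xi> using k e by (simp add: add_nonneg_pos)
  have "integral {0..L} (\<lambda>t. (mt t)\<^sup>2) = \<Psi> 0 - \<Psi> d"
  proof (rule main_ftc)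
    have "continuous_on {d..0} (\<lambda>\<xi>. (- \<xi>) powr 3)"
      by (intro continuous_on_powr' continuous_intros) auto
    then have c1: "continuous_on {d..0} (\<lambda>\<xi>. k * (- \<xi>) powr 3 + e)"
      by (rule continuous_on_add[OF continuous_on_mult[OF continuous_on_const] continuous_on_const])
    show "continuous_on {d..0} \<Psi>" unfolding \<Psi>_def
      by (rule continuous_on_mult[OF continuous_on_const continuous_on_ln[OF c1]])
         (use pos in \<open>metis less_irrefl\<close>)
    fix \<xi> :: real assume x: "d < \<xi>" "\<xi> < 0"
    have "(\<Psi> has_real_derivative - 1 / (3 * k) * (k * (3 * (- \<xi>) powr (3 - 1) * (- 1)) / (k * (- \<xi>) powr 3 + e))) (at \<xi>)"
      unfolding \<Psi>_def using x pos[of \<xi>] by (auto intro!: derivative_eq_intros)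
    moreover have "- 1 / (3 * k) * (k * (3 * (- \<xi>) powr (3 - 1) * (- 1)) / (k * (- \<xi>) powr 3 + e)) = \<xi>\<^sup>2 / Hf \<xi>"
    proof -
      have "(- \<xi>) powr (3 - 1) = \<xi>\<^sup>2" using x by (simp add: powr_numeral)
      moreover have "Hf \<xi> = k * (- \<xi>) powr 3 + e" using x a2 by (simp add: H_def)
      ultimately show ?thesis using k by (simp add: field_simps)
    qed
    ultimately show "(\<Psi> has_real_derivative \<xi>\<^sup>2 / Hf \<xi>) (at \<xi>)" by simp
  qed
  then show ?thesis unfolding \<Psi>_def by (simp add: algebra_simps diff_divide_distrib)
qed

end


context EP begin

lemma main_gt2:
  assumes a2: "a > 2"
  defines "q \<equiv> 1 + a"
  defines "s \<equiv> 3 / q"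
  shows "integral {0..L} (\<lambda>t. (mt t)\<^sup>2) =
           1/q * k powr (-s) * e powr (s-1) * Gi s (k * (- d) powr q / (k * (- d) powr q + e))"
proof -
  have q: "q > 3" unfolding q_def using a2 by simp
  have s: "0 < s" "s < 1" "s * q = 3" unfolding s_def using q by auto
  define \<psi> where "\<psi> \<xi> = k * (- \<xi>) powr q / (k * (- \<xi>) powr q + e)" for \<xi>
  define C where "C = 1/q * k powr (-s) * e powr (s-1)"
  define \<Psi> where "\<Psi> \<xi> = - C * Gi s (\<psi> \<xi>)" for \<xi>
  have pos: "k * (- \<xi>) powr q + e > 0" for \<xi> using k e by (simp add: add_nonneg_pos)
  have \<psi>01: "\<psi> \<xi> \<in> {0..1}" for \<xi>
    using pos[of \<xi>] k e unfolding \<psi>_def by (auto simp: divide_le_eq_1)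
  have "integral {0..L} (\<lambda>t. (mt t)\<^sup>2) = \<Psi> 0 - \<Psi> d"
  proof (rule main_ftc)
    have "continuous_on {d..0} (\<lambda>\<xi>. (- \<xi>) powr q)"
      using q by (intro continuous_on_powr' continuous_intros) auto
    then have c1: "continuous_on {d..0} (\<lambda>\<xi>. k * (- \<xi>) powr q)"
      by (rule continuous_on_mult[OF continuous_on_const])
    have c2: "continuous_on {d..0} \<psi>" unfolding \<psi>_def
      by (rule continuous_on_divide[OF c1 continuous_on_add[OF c1 continuous_on_const]])
         (use pos in \<open>metis less_irrefl\<close>)
    have c3: "continuous_on {d..0} (\<lambda>\<xi>. Gi s (\<psi> \<xi>))"
      by (rule continuous_on_compose2[OF Gi_cont[OF s(1,2)] c2]) (use \<psi>01 in auto)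
    show "continuous_on {d..0} \<Psi>" unfolding \<Psi>_def
      by (rule continuous_on_mult[OF continuous_on_const c3])
    fix \<xi> :: real assume x: "d < \<xi>" "\<xi> < 0"
    define t where "t = - \<xi>"
    have t: "t > 0" using x by (simp add: t_def)
    define Hh where "Hh = k * t powr q + e"
    have Hh: "Hh > 0" using pos[of \<xi>] by (simp add: Hh_def t_def)
    have d\<psi>: "(\<psi> has_real_derivative - (k * q * t powr (q - 1) * e / Hh\<^sup>2)) (at \<xi>)"
    proof -
      have "(\<psi> has_real_derivative
          ((k * (q * (- \<xi>) powr (q - 1) * (- 1))) * (k * (- \<xi>) powr q + e) -
            k * (- \<xi>) powr q * (k * (q * (- \<xi>) powr (q - 1) * (- 1)))) /
          ((k * (- \<xi>) powr q + e) * (k * (- \<xi>) powr q + e))) (at \<xi>)"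
        unfolding \<psi>_def using x pos[of \<xi>]
        by (auto intro!: derivative_eq_intros simp: less_imp_neq[symmetric])
      moreover have "((k * (q * (- \<xi>) powr (q - 1) * (- 1))) * (k * (- \<xi>) powr q + e) -
            k * (- \<xi>) powr q * (k * (q * (- \<xi>) powr (q - 1) * (- 1)))) /
          ((k * (- \<xi>) powr q + e) * (k * (- \<xi>) powr q + e)) = - (k * q * t powr (q - 1) * e / Hh\<^sup>2)"
        unfolding Hh_def t_def by (simp add: power2_eq_square algebra_simps)
      ultimately show ?thesis by simp
    qed
    have \<psi>in: "0 < \<psi> \<xi>" "\<psi> \<xi> < 1"
      using pos[of \<xi>] k e x unfolding \<psi>_def by (auto simp: divide_less_eq_1)
    have "(\<Psi> has_real_derivative - C * (gB s (\<psi> \<xi>) * - (k * q * t powr (q - 1) * e / Hh\<^sup>2))) (at \<xi>)"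
      unfolding \<Psi>_def
      by (intro DERIV_cmult DERIV_chain2[OF Gi_deriv[OF s(1,2) \<psi>in] d\<psi>])
    moreover have "- C * (gB s (\<psi> \<xi>) * - (k * q * t powr (q - 1) * e / Hh\<^sup>2)) = \<xi>\<^sup>2 / Hf \<xi>"
    proof -
      have ps: "\<psi> \<xi> = k * t powr q / Hh" unfolding \<psi>_def Hh_def t_def by simp
      have ps1: "1 - \<psi> \<xi> = e / Hh" unfolding ps using Hh by (simp add: field_simps Hh_def)
      have hf: "Hf \<xi> = Hh" unfolding Hh_def t_def q_def using x by (simp add: H_def)
      have "- C * (gB s (\<psi> \<xi>) * - (k * q * t powr (q - 1) * e / Hh\<^sup>2))
          = (1/q) * k powr (-s) * e powr (s-1) * ((k * t powr q / Hh) powr (s-1) * (e / Hh) powr (-s))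
            * (k * q * t powr (q - 1) * e / Hh\<^sup>2)"
        unfolding C_def gB_def ps1 by (simp add: ps)
      also have "\<dots> = t\<^sup>2 / Hh"
        unfolding Hh_def by (rule key_alg[OF t k e _ s(3)]) (use q in simp)
      finally show ?thesis using hf by (simp add: t_def)
    qed
    ultimately show "(\<Psi> has_real_derivative \<xi>\<^sup>2 / Hf \<xi>) (at \<xi>)" by simp
  qed
  moreover have "\<Psi> 0 = 0" unfolding \<Psi>_def \<psi>_def Gi_def using q by simp
  ultimately show ?thesis unfolding \<Psi>_def \<psi>_def C_def by simp
qed

end


definition CCx :: "real \<Rightarrow> real \<Rightarrow> real \<Rightarrow> real \<Rightarrow> real \<Rightarrow> real" where
  "CCx k a d B0 B1 =
    (let Pd = - d; PA = Pd powr a; M = k * Pd * PA + 1;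
         c0 = k * (1 + a) * PA * (a/2 + 1 + a);
         Cc = 2 * Pd * c0 + c0\<^sup>2 * M + (1 + a)\<^sup>2 * M;
         Vb = (1 + a) * M; V'b = k * a * (1 + a) * PA * M; Hb = k * (1 + a) * PA;
         G1 = B1 * (Pd + Vb/2) + B0 * (Pd + V'b/2); G2 = B0 * Vb;
         Kc = (G1 + Hb * G2)\<^sup>2 + G2\<^sup>2 + Pd\<^sup>2
     in 4 * Kc + Cc * Pd)"

context EPT begin
lemma CCx_eq: "4 * Kc B0 B1 + Cc * Pd = CCx k a d B0 B1"
  by (simp add: CCx_def Let_def Kc_def G1_def G2_def Hb_def V'b_def Vb_def Cc_def c0_def M_def PA_def Pd_def)
end

lemma per_eps:
  fixes \<kappa> \<alpha> \<delta> \<epsilon> B0 B1 :: real and \<theta> :: "real \<Rightarrow> real"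
  assumes "\<kappa> > 0" "\<alpha> \<ge> 2" "\<delta> < 0" "0 < \<epsilon>" "\<epsilon> \<le> 1"
    and "smooth \<theta>" "\<forall>t \<le> 0. \<theta> t = 0" "\<forall>t \<ge> 1. \<theta> t = 1"
    and B0: "\<forall>t\<in>{0..1}. \<bar>\<theta> t\<bar> \<le> B0" and B1: "\<forall>t\<in>{0..1}. \<bar>deriv \<theta> t\<bar> \<le> B1"
  shows "set_integrable lborel (Rect \<kappa> \<alpha> \<delta> \<epsilon>) (energy_density \<kappa> \<alpha> \<delta> \<theta> \<epsilon>)"
    and "\<alpha> = 2 \<Longrightarrow> \<bar>(LINT x : Rect \<kappa> \<alpha> \<delta> \<epsilon> | lborel. energy_density \<kappa> \<alpha> \<delta> \<theta> \<epsilon> x)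
            - 1 / (3 * \<kappa>) * (ln (\<kappa> * (- \<delta>) powr 3 + \<epsilon>) - ln \<epsilon>)\<bar> \<le> CCx \<kappa> \<alpha> \<delta> B0 B1"
    and "\<alpha> > 2 \<Longrightarrow> \<bar>(LINT x : Rect \<kappa> \<alpha> \<delta> \<epsilon> | lborel. energy_density \<kappa> \<alpha> \<delta> \<theta> \<epsilon> x)
            - 1/(1+\<alpha>) * \<kappa> powr (-(3/(1+\<alpha>))) * \<epsilon> powr (3/(1+\<alpha>) - 1) *
               Gi (3/(1+\<alpha>)) (\<kappa> * (- \<delta>) powr (1+\<alpha>) / (\<kappa> * (- \<delta>) powr (1+\<alpha>) + \<epsilon>))\<bar>
           \<le> CCx \<kappa> \<alpha> \<delta> B0 B1"
proof -
  interpret EPT \<kappa> \<alpha> \<delta> \<epsilon> \<theta>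
    by unfold_locales (use assms in auto)
  have B1': "\<forall>t\<in>{0..1}. \<bar>T1 t\<bar> \<le> B1" using B1 by (simp add: T1_def)
  have cl: "\<bar>(LINT x : Rect \<kappa> \<alpha> \<delta> \<epsilon> | lborel. energy_density \<kappa> \<alpha> \<delta> \<theta> \<epsilon> x) - integral {0..L} (\<lambda>t. (mt t)\<^sup>2)\<bar>
           \<le> CCx \<kappa> \<alpha> \<delta> B0 B1"
    using energy_close[OF assms(5) B0 B1'] CCx_eq by simp
  show "set_integrable lborel (Rect \<kappa> \<alpha> \<delta> \<epsilon>) (energy_density \<kappa> \<alpha> \<delta> \<theta> \<epsilon>)"
    by (rule energy_integrable)
  show "\<alpha> = 2 \<Longrightarrow> \<bar>(LINT x : Rect \<kappa> \<alpha> \<delta> \<epsilon> | lborel. energy_density \<kappa> \<alpha> \<delta> \<theta> \<epsilon> x)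
            - 1 / (3 * \<kappa>) * (ln (\<kappa> * (- \<delta>) powr 3 + \<epsilon>) - ln \<epsilon>)\<bar> \<le> CCx \<kappa> \<alpha> \<delta> B0 B1"
    using cl main_2 by simp
  show "\<alpha> > 2 \<Longrightarrow> \<bar>(LINT x : Rect \<kappa> \<alpha> \<delta> \<epsilon> | lborel. energy_density \<kappa> \<alpha> \<delta> \<theta> \<epsilon> x)
            - 1/(1+\<alpha>) * \<kappa> powr (-(3/(1+\<alpha>))) * \<epsilon> powr (3/(1+\<alpha>) - 1) *
               Gi (3/(1+\<alpha>)) (\<kappa> * (- \<delta>) powr (1+\<alpha>) / (\<kappa> * (- \<delta>) powr (1+\<alpha>) + \<epsilon>))\<bar>
           \<le> CCx \<kappa> \<alpha> \<delta> B0 B1"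
    using cl main_gt2 by simp
qed

lemma asymp_from_close:
  fixes LI MI f :: "real \<Rightarrow> real" and F :: "real filter"
  assumes close: "\<forall>\<^sub>F x in F. \<bar>LI x - MI x\<bar> \<le> C"
    and rat: "((\<lambda>x. MI x / f x) \<longlongrightarrow> 1) F"
    and top: "filterlim f at_top F"
  shows "LI \<sim>[F] f"
proof (rule asymp_equivI')
  have fpos: "\<forall>\<^sub>F x in F. f x > 0" using top by (simp add: filterlim_at_top_dense)
  have c0: "((\<lambda>x. C / f x) \<longlongrightarrow> 0) F"
    by (rule tendsto_divide_0[OF tendsto_const filterlim_at_top_imp_at_infinity[OF top]])
  have d0: "((\<lambda>x. (LI x - MI x) / f x) \<longlongrightarrow> 0) F"
  proof (rule Lim_null_comparison[OF _ c0])
    show "\<forall>\<^sub>F x in F. norm ((LI x - MI x) / f x) \<le> C / f x"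
      using close fpos by eventually_elim (simp add: abs_divide divide_right_mono)
  qed
  have "((\<lambda>x. MI x / f x + (LI x - MI x) / f x) \<longlongrightarrow> 1 + 0) F"
    by (intro tendsto_add rat d0)
  then have "((\<lambda>x. MI x / f x + (LI x - MI x) / f x) \<longlongrightarrow> 1) F" by simp
  then show "((\<lambda>x. LI x / f x) \<longlongrightarrow> 1) F"
    by (rule tendsto_cong[THEN iffD1, rotated])
       (use fpos in \<open>eventually_elim, simp add: diff_divide_distrib\<close>)
qed



lemma Beta_refl:
  fixes s :: real assumes "0 < s" "s < 1"
  shows "Beta s (1 - s) = pi / sin (pi * s)"
proof -
  have "complex_of_real (Gamma s * Gamma (1 - s)) = of_real pi / sin (of_real pi * of_real s)"
    using Gamma_reflection_complex[of "of_real s"] using Gamma_complex_of_real[of "1-s"]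
    by (simp add: Gamma_complex_of_real)
  also have "\<dots> = of_real (pi / sin (pi * s))"
    by (metis of_real_divide of_real_mult sin_of_real)
  finally have "Gamma s * Gamma (1 - s) = pi / sin (pi * s)" using of_real_eq_iff by blast
  thus ?thesis by (simp add: Beta_def)
qed

theorem lemma6p3:
  fixes \<kappa> \<alpha> \<delta> :: real and \<theta> :: "real \<Rightarrow> real"
  assumes "\<kappa> > 0" "\<alpha> \<ge> 2" "\<delta> < 0"
    and "smooth \<theta>" "\<forall>t \<le> 0. \<theta> t = 0" "\<forall>t \<ge> 1. \<theta> t = 1"
  shows "(\<forall>\<^sub>F \<epsilon> in at_right 0.
            set_integrable lborel (Rect \<kappa> \<alpha> \<delta> \<epsilon>) (energy_density \<kappa> \<alpha> \<delta> \<theta> \<epsilon>))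
    \<and> (\<lambda>\<epsilon>. LINT x : Rect \<kappa> \<alpha> \<delta> \<epsilon> | lborel. energy_density \<kappa> \<alpha> \<delta> \<theta> \<epsilon> x)
        \<sim>[at_right 0]
      (\<lambda>\<epsilon>. if \<alpha> = 2 then 1/3 * (1/\<kappa>) * \<bar>ln \<epsilon>\<bar>
            else 1/3 * \<epsilon> powr (3/(1+\<alpha>) - 1) * \<kappa> powr (-(3/(1+\<alpha>)))
                 * ((3*pi/(1+\<alpha>)) / sin (3*pi/(1+\<alpha>))))"
proof -
  note sm = assms(4)
  have ct: "continuous_on {0..1} \<theta>"
  proof -
    have "\<forall>x. \<theta> differentiable (at x)" using sm unfolding smooth_def
      by (metis funpow_0)
    then show ?thesis
      by (meson continuous_at_imp_continuous_on differentiable_imp_continuous_within)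
  qed
  have cd: "continuous_on {0..1} (deriv \<theta>)"
  proof -
    have "\<forall>x. ((deriv ^^ 1) \<theta>) differentiable (at x)" using sm unfolding smooth_def by blast
    then have "\<forall>x. deriv \<theta> differentiable (at x)" by simp
    then show ?thesis
      by (meson continuous_at_imp_continuous_on differentiable_imp_continuous_within)
  qed
  obtain B0 where B0: "\<forall>t\<in>{0..1}. \<bar>\<theta> t\<bar> \<le> B0"
    using compact_imp_bounded[OF compact_continuous_image[OF ct compact_Icc]]
    unfolding bounded_iff by auto
  obtain B1 where B1: "\<forall>t\<in>{0..1}. \<bar>deriv \<theta> t\<bar> \<le> B1"
    using compact_imp_bounded[OF compact_continuous_image[OF cd compact_Icc]]
    unfolding bounded_iff by auto
  define C where "C = CCx \<kappa> \<alpha> \<delta> B0 B1"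
  have ev01: "\<forall>\<^sub>F \<epsilon> in at_right 0. \<epsilon> \<in> {0<..<(1::real)}"
    by (rule eventually_at_right_real) simp
  note pe = per_eps[OF assms(1,2,3) _ _ assms(4,5,6) B0 B1]
  have P1: "\<forall>\<^sub>F \<epsilon> in at_right 0.
            set_integrable lborel (Rect \<kappa> \<alpha> \<delta> \<epsilon>) (energy_density \<kappa> \<alpha> \<delta> \<theta> \<epsilon>)"
    using ev01 by eventually_elim (rule pe(1), auto)
  define LI where "LI \<epsilon> = (LINT x : Rect \<kappa> \<alpha> \<delta> \<epsilon> | lborel. energy_density \<kappa> \<alpha> \<delta> \<theta> \<epsilon> x)" for \<epsilon>
  define f where "f \<epsilon> = (if \<alpha> = 2 then 1/3 * (1/\<kappa>) * \<bar>ln \<epsilon>\<bar>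
            else 1/3 * \<epsilon> powr (3/(1+\<alpha>) - 1) * \<kappa> powr (-(3/(1+\<alpha>)))
                 * ((3*pi/(1+\<alpha>)) / sin (3*pi/(1+\<alpha>))))" for \<epsilon>
  have P2: "LI \<sim>[at_right 0] f"
  proof (cases "\<alpha> = 2")
    case True
    define c where "c = \<kappa> * (- \<delta>) powr 3"
    have "(- \<delta>) powr 3 > 0" using assms(3) by (subst powr_gt_zero) simp
    then have c: "c > 0" unfolding c_def using assms(1) by (intro mult_pos_pos)
    define MI where "MI \<epsilon> = 1 / (3 * \<kappa>) * (ln (c + \<epsilon>) - ln \<epsilon>)" for \<epsilon>
    show ?thesis
    proof (rule asymp_from_close[where MI = MI and C = C])
      show "\<forall>\<^sub>F x in at_right 0. \<bar>LI x - MI x\<bar> \<le> C"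
        using ev01 by eventually_elim (use pe(2) True in \<open>auto simp: LI_def MI_def c_def C_def\<close>)
      have "((\<lambda>x. (1 / (3 * \<kappa>) * (ln (c + x) - ln x)) / (1/3 * (1/\<kappa>) * \<bar>ln x\<bar>)) \<longlongrightarrow> 1) (at_right 0)"
        using c assms(1) by real_asymp
      then show "((\<lambda>x. MI x / f x) \<longlongrightarrow> 1) (at_right 0)"
        unfolding MI_def f_def using True by simp
      have "filterlim (\<lambda>x. 1/3 * (1/\<kappa>) * \<bar>ln x\<bar>) at_top (at_right 0)"
        using assms(1) by real_asymp
      then show "filterlim f at_top (at_right 0)" unfolding f_def using True by simp
    qed
  next
    case False
    then have a2: "\<alpha> > 2" using assms(2) by simp
    define q where "q = 1 + \<alpha>"
    define s where "s = 3 / q"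
    have q: "q > 3" unfolding q_def using a2 by simp
    have s: "0 < s" "s < 1" unfolding s_def using q by auto
    define c where "c = \<kappa> * (- \<delta>) powr q"
    have c: "c > 0" unfolding c_def using assms by simp
    define w where "w \<epsilon> = c / (c + \<epsilon>)" for \<epsilon>
    define MI where "MI \<epsilon> = 1/q * \<kappa> powr (-s) * \<epsilon> powr (s - 1) * Gi s (w \<epsilon>)" for \<epsilon>
    have G1: "Gi s 1 = pi / sin (pi * s)" using Gi_1[OF s] Beta_refl[OF s] by simp
    have sinpos: "sin (pi * s) > 0" using s by (intro sin_gt_zero) auto
    have G1pos: "Gi s 1 > 0" using G1 sinpos by simp
    define K where "K = 1/q * \<kappa> powr (-s) * Gi s 1"
    have Kpos: "K > 0" unfolding K_def using q G1pos assms(1) by simp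
    have fK: "f \<epsilon> = K * \<epsilon> powr (s - 1)" for \<epsilon>
    proof -
      have "3 * pi / (1 + \<alpha>) = pi * s" by (simp add: s_def q_def)
      then show ?thesis unfolding f_def K_def G1 using False
        by (simp add: s_def q_def field_simps)
    qed
    show ?thesis
    proof (rule asymp_from_close[where MI = MI and C = C])
      show "\<forall>\<^sub>F x in at_right 0. \<bar>LI x - MI x\<bar> \<le> C"
        using ev01 by eventually_elim (use pe(3) a2 in \<open>auto simp: LI_def MI_def c_def C_def w_def s_def q_def\<close>)
      have wl: "(w \<longlongrightarrow> 1) (at_right 0)"
      proof -
        have "((\<lambda>x. c / (c + x)) \<longlongrightarrow> c / (c + 0)) (at_right 0)"
          using c by (intro tendsto_intros) auto
        then show ?thesis using c by (simp add: w_def[abs_def])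
      qed
      have "((\<lambda>x. Gi s (w x)) \<longlongrightarrow> Gi s 1) (at_right 0)"
      proof (rule continuous_on_tendsto_compose[OF Gi_cont[OF s] wl])
        show "(1::real) \<in> {0..1}" by simp
        show "\<forall>\<^sub>F x in at_right 0. w x \<in> {0..1}"
          using ev01 by eventually_elim (use c in \<open>auto simp: w_def divide_le_eq_1\<close>)
      qed
      then have "((\<lambda>x. Gi s (w x) / Gi s 1) \<longlongrightarrow> Gi s 1 / Gi s 1) (at_right 0)"
        using G1pos by (intro tendsto_intros) auto
      then have lim: "((\<lambda>x. Gi s (w x) / Gi s 1) \<longlongrightarrow> 1) (at_right 0)" using G1pos by simp
      show "((\<lambda>x. MI x / f x) \<longlongrightarrow> 1) (at_right 0)"
      proof (rule tendsto_cong[THEN iffD1, OF _ lim])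
        show "\<forall>\<^sub>F x in at_right 0. Gi s (w x) / Gi s 1 = MI x / f x"
          using ev01 by eventually_elim (use q G1pos assms(1) in \<open>auto simp: MI_def fK K_def\<close>)
      qed
      have "filterlim (\<lambda>x. K * x powr (s - 1)) at_top (at_right 0)"
        using Kpos s by real_asymp
      moreover have "f = (\<lambda>x. K * x powr (s - 1))" using fK by (simp add: fun_eq_iff)
      ultimately show "filterlim f at_top (at_right 0)" by simp
    qed
  qed
  show ?thesis using P1 P2 unfolding LI_def f_def by simp
qed



end
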